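(* Let $\psi\in C^1((0,\infty))$, $d>0$, and let $G=(V,E)$ be a finite graph satisfying $CD\psi(d,0)$. Let $u$ be a positive solution to the heat equation on $G$. Then for all $x\in V$ and $t>0$, \[ -\Delta^\psi u(x,t)\le\frac{d}{2t}. \]
   Context: A finite graph $G=(V,E)$: finite set $V$, irreflexive symmetric relation $E$; $v\sim w$ iff $(v,w)\in E$. $C^+(V)$: positive functions on $V$. Laplacian $\Delta f(v)=\sum_{w\sim v}(f(w)-f(v))$. For $f\in C^+(V)$: $(\Delta^\psi f)(v):=\Delta\big[\psi\big(\tfrac{f}{f(v)}\big)\big](v)$; $(\Omega^\psi f)(v):=\Delta\Big[\psi'\big(\tfrac{f}{f(v)}\big)\cdot\tfrac{f}{f(v)}\cdot\big(\tfrac{\Delta f}{f}-\tfrac{(\Delta f)(v)}{f(v)}\big)\Big](v)$; $2\Gamma_2^\psi(f):=\Omega^\psi f+\frac{\Delta f\,\Delta^\psi f}{f}-\frac{\Delta(f\,\Delta^\psi f)}{f}$. $G$ satisfies $CD\psi(d,0)$ if $\Gamma_2^\psi(f)\ge\frac1d(\Delta^\psi f)^2$ for all $f\in C^+(V)$. A solution to the heat equation on $G$ is $u:V\times[0,\infty)\to\mathbb{R}$, continuously differentiable in $t$, with $\Delta u-\partial_t u=0$; $\Delta^\psi u(x,t)$ means $(\Delta^\psi u(\cdot,t))(x)$. *)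

theory Defs
  imports "HOL-Analysis.Analysis"
begin

definition finite_graph :: "'a set \<Rightarrow> ('a \<Rightarrow> 'a \<Rightarrow> bool) \<Rightarrow> bool" where
  "finite_graph V E \<longleftrightarrow> finite V \<and> (\<forall>v w. E v w \<longrightarrow> v \<in> V \<and> w \<in> V)
     \<and> (\<forall>v. \<not> E v v) \<and> (\<forall>v w. E v w \<longrightarrow> E w v)"

definition lap :: "'a set \<Rightarrow> ('a \<Rightarrow> 'a \<Rightarrow> bool) \<Rightarrow> ('a \<Rightarrow> real) \<Rightarrow> 'a \<Rightarrow> real" where
  "lap V E f v = (\<Sum>w\<in>{w\<in>V. E v w}. f w - f v)"

definition lap_psi :: "'a set \<Rightarrow> ('a \<Rightarrow> 'a \<Rightarrow> bool) \<Rightarrow> (real \<Rightarrow> real) \<Rightarrow> ('a \<Rightarrow> real) \<Rightarrow> 'a \<Rightarrow> real" where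
  "lap_psi V E \<psi> f v = lap V E (\<lambda>w. \<psi> (f w / f v)) v"

definition Omega_psi :: "'a set \<Rightarrow> ('a \<Rightarrow> 'a \<Rightarrow> bool) \<Rightarrow> (real \<Rightarrow> real) \<Rightarrow> ('a \<Rightarrow> real) \<Rightarrow> 'a \<Rightarrow> real" where
  "Omega_psi V E \<psi> f v = lap V E (\<lambda>w. deriv \<psi> (f w / f v) * (f w / f v)
       * (lap V E f w / f w - lap V E f v / f v)) v"

text \<open>\<open>Gamma2_psi\<close> is \<open>\<Gamma>\<^sub>2\<^sup>\<psi>\<close>, i.e. half of the defining expression for \<open>2\<Gamma>\<^sub>2\<^sup>\<psi>\<close>.\<close>
definition Gamma2_psi :: "'a set \<Rightarrow> ('a \<Rightarrow> 'a \<Rightarrow> bool) \<Rightarrow> (real \<Rightarrow> real) \<Rightarrow> ('a \<Rightarrow> real) \<Rightarrow> 'a \<Rightarrow> real" where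
  "Gamma2_psi V E \<psi> f v = (Omega_psi V E \<psi> f v
       + lap V E f v * lap_psi V E \<psi> f v / f v
       - lap V E (\<lambda>w. f w * lap_psi V E \<psi> f w) v / f v) / 2"

definition CD_psi :: "'a set \<Rightarrow> ('a \<Rightarrow> 'a \<Rightarrow> bool) \<Rightarrow> (real \<Rightarrow> real) \<Rightarrow> real \<Rightarrow> bool" where
  "CD_psi V E \<psi> d \<longleftrightarrow> (\<forall>f. (\<forall>v\<in>V. f v > 0) \<longrightarrow>
      (\<forall>v\<in>V. Gamma2_psi V E \<psi> f v \<ge> (lap_psi V E \<psi> f v)\<^sup>2 / d))"

definition heat_solution :: "'a set \<Rightarrow> ('a \<Rightarrow> 'a \<Rightarrow> bool) \<Rightarrow> ('a \<Rightarrow> real \<Rightarrow> real) \<Rightarrow> bool" where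
  "heat_solution V E u \<longleftrightarrow> (\<exists>u'. \<forall>x\<in>V.
      continuous_on {0..} (u' x) \<and>
      (\<forall>t\<ge>0. (u x has_real_derivative u' x t) (at t within {0..})
              \<and> lap V E (\<lambda>y. u y t) x - u' x t = 0))"

end

theory Submission
  imports Defs
begin

lemma term_deriv:
  assumes psi: "\<forall>s>0. \<psi> differentiable (at s)"
    and pos: "\<forall>x\<in>V. \<forall>t\<ge>0. u x t > 0"
    and der: "\<forall>x\<in>V. \<forall>t\<ge>0. (u x has_real_derivative lap V E (\<lambda>y. u y t) x) (at t within {0..})"
    and x: "x \<in> V" and w: "w \<in> V" and t: "t \<ge> 0"
  shows "((\<lambda>t. \<psi> (u w t / u x t)) has_real_derivative
     deriv \<psi> (u w t / u x t) * (u w t / u x t) *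
       (lap V E (\<lambda>y. u y t) w / u w t - lap V E (\<lambda>y. u y t) x / u x t)) (at t within {0..})"
proof -
  have ux: "u x t > 0" and uw: "u w t > 0" using pos x w t by auto
  have q: "((\<lambda>t. u w t / u x t) has_real_derivative
      (lap V E (\<lambda>y. u y t) w * u x t - u w t * lap V E (\<lambda>y. u y t) x) / (u x t * u x t)) (at t within {0..})"
    by (rule DERIV_divide) (use der x w t ux in auto)
  have p: "DERIV \<psi> (u w t / u x t) :> deriv \<psi> (u w t / u x t)"
    using psi ux uw by (simp add: DERIV_deriv_iff_real_differentiable)
  from DERIV_chain2[OF p q] show ?thesis
    by (rule DERIV_cong) (use ux uw in \<open>simp add: field_simps\<close>)
qed

lemma phi_deriv:
  assumes fg: "finite_graph V E"
    and psi: "\<forall>s>0. \<psi> differentiable (at s)"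
    and pos: "\<forall>x\<in>V. \<forall>t\<ge>0. u x t > 0"
    and der: "\<forall>x\<in>V. \<forall>t\<ge>0. (u x has_real_derivative lap V E (\<lambda>y. u y t) x) (at t within {0..})"
    and x: "x \<in> V" and t: "t \<ge> 0"
  shows "((\<lambda>t. lap_psi V E \<psi> (\<lambda>y. u y t) x) has_real_derivative
     Omega_psi V E \<psi> (\<lambda>y. u y t) x) (at t within {0..})"
  unfolding lap_psi_def lap_def Omega_psi_def
  apply (rule DERIV_sum)
  apply (rule DERIV_diff)
   apply (rule term_deriv[OF psi pos der x _ t, unfolded lap_def], simp)
  apply (rule term_deriv[OF psi pos der x x t, unfolded lap_def])
  done

lemma gamma_ident:
  assumes fx: "f x > 0"
  shows "Omega_psi V E \<psi> f x = 2 * Gamma2_psi V E \<psi> f x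
     + (\<Sum>w\<in>{w\<in>V. E x w}. f w * (lap_psi V E \<psi> f w - lap_psi V E \<psi> f x)) / f x"
proof -
  define N where "N = {w\<in>V. E x w}"
  define p where "p = lap_psi V E \<psi> f"
  have a: "lap V E f x * p x - lap V E (\<lambda>w. f w * p w) x
      = (\<Sum>w\<in>N. f w * (p w - p x)) * (-1)"
    unfolding lap_def N_def[symmetric]
    by (simp add: sum_distrib_left sum_distrib_right sum.distrib[symmetric] sum_subtractf[symmetric] sum_negf[symmetric] algebra_simps)
  have a': "lap V E (\<lambda>w. f w * p w) x = lap V E f x * p x + (\<Sum>w\<in>N. f w * (p w - p x))"
    using a by linarith
  show ?thesis
    unfolding Gamma2_psi_def p_def[symmetric] N_def[symmetric]
    using fx by (simp add: field_simps a')
qed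

theorem mainTheorem7:
  fixes V :: "'a set" and E :: "'a \<Rightarrow> 'a \<Rightarrow> bool" and \<psi> :: "real \<Rightarrow> real"
    and d :: real and u :: "'a \<Rightarrow> real \<Rightarrow> real"
  assumes "\<forall>s>0. \<psi> differentiable (at s)"
    and "continuous_on {0<..} (deriv \<psi>)"
    and "d > 0"
    and "finite_graph V E"
    and "CD_psi V E \<psi> d"
    and "heat_solution V E u"
    and "\<forall>x\<in>V. \<forall>t\<ge>0. u x t > 0"
  shows "\<forall>x\<in>V. \<forall>t>0. - lap_psi V E \<psi> (\<lambda>y. u y t) x \<le> d / (2 * t)"
proof -
  note psi = assms(1) and dpos = assms(3) and fg = assms(4) and cd = assms(5)
    and pos = assms(7)
  from assms(6) obtain u' where hu: "\<forall>x\<in>V. continuous_on {0..} (u' x) \<and>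
      (\<forall>t\<ge>0. (u x has_real_derivative u' x t) (at t within {0..})
              \<and> lap V E (\<lambda>y. u y t) x - u' x t = 0)"
    unfolding heat_solution_def by blast
  have der: "\<forall>x\<in>V. \<forall>t\<ge>0. (u x has_real_derivative lap V E (\<lambda>y. u y t) x) (at t within {0..})"
  proof (intro ballI allI impI)
    fix x t assume "x \<in> V" "(t::real) \<ge> 0"
    with hu show "(u x has_real_derivative lap V E (\<lambda>y. u y t) x) (at t within {0..})"
      by (metis eq_iff_diff_eq_0)
  qed
  define \<phi> where "\<phi> x t = lap_psi V E \<psi> (\<lambda>y. u y t) x" for x t
  define H where "H x t = - t * \<phi> x t" for x t
  have Hder: "((H x) has_real_derivative (- \<phi> x t - t * Omega_psi V E \<psi> (\<lambda>y. u y t) x)) (at t within {0..})"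
    if "x \<in> V" "t \<ge> 0" for x t
  proof -
    have a: "((\<lambda>t. - t) has_real_derivative -1) (at t within {0..})"
      by (auto intro!: derivative_eq_intros)
    have b: "((\<lambda>t. \<phi> x t) has_real_derivative Omega_psi V E \<psi> (\<lambda>y. u y t) x) (at t within {0..})"
      unfolding \<phi>_def by (rule phi_deriv[OF fg psi pos der that])
    have "((\<lambda>t. - t * \<phi> x t) has_real_derivative (-1) * \<phi> x t + Omega_psi V E \<psi> (\<lambda>y. u y t) x * (- t)) (at t within {0..})"
      by (rule DERIV_mult[OF a b])
    then show ?thesis unfolding H_def[abs_def] by (rule DERIV_cong) simp
  qed
  show ?thesis
  proof (intro ballI allI impI)
    fix x T assume xV: "x \<in> V" and T: "(T::real) > 0"
    have cont: "continuous_on {0..T} (H y)" if "y \<in> V" for y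
      by (rule DERIV_continuous_on[where D="\<lambda>t. - \<phi> y t - t * Omega_psi V E \<psi> (\<lambda>z. u z t) y"])
         (rule DERIV_subset[OF Hder[OF that]], auto)
    have "\<forall>y\<in>V. \<exists>s. s \<in> {0..T} \<and> (\<forall>r\<in>{0..T}. H y r \<le> H y s)"
    proof
      fix y assume "y \<in> V"
      from continuous_attains_sup[OF compact_Icc _ cont[OF this]] T
      show "\<exists>s. s \<in> {0..T} \<and> (\<forall>r\<in>{0..T}. H y r \<le> H y s)" by auto
    qed
    then obtain tm where tm: "\<forall>y\<in>V. tm y \<in> {0..T} \<and> (\<forall>r\<in>{0..T}. H y r \<le> H y (tm y))"
      by metis
    have finV: "finite V" using fg unfolding finite_graph_def by blast
    define m where "m = Max ((\<lambda>y. H y (tm y)) ` V)"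
    have "m \<in> (\<lambda>y. H y (tm y)) ` V" unfolding m_def using finV xV by (intro Max_in) auto
    then obtain x0 where x0: "x0 \<in> V" "m = H x0 (tm x0)" by auto
    define t0 where "t0 = tm x0"
    have t0T: "t0 \<in> {0..T}" using tm x0 t0_def by auto
    have glob: "H y r \<le> H x0 t0" if "y \<in> V" "r \<in> {0..T}" for y r
    proof -
      have "H y r \<le> H y (tm y)" using tm that by auto
      also have "\<dots> \<le> m" unfolding m_def using finV that by (intro Max_ge) auto
      finally show ?thesis using x0 t0_def by simp
    qed
    have main: "H x0 t0 \<le> d / 2"
    proof (rule ccontr)
      assume "\<not> H x0 t0 \<le> d / 2"
      hence hbig: "H x0 t0 > d / 2" by simp
      have t0pos: "t0 > 0"
      proof (rule ccontr)
        assume "\<not> t0 > 0"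
        with t0T have "t0 = 0" by auto
        with hbig dpos show False unfolding H_def by simp
      qed
      define f where "f = (\<lambda>y. u y t0)"
      define Om where "Om = Omega_psi V E \<psi> f x0"
      define p where "p = \<phi> x0 t0"
      have fpos: "\<forall>v\<in>V. f v > 0" using pos t0pos unfolding f_def by auto
      have G: "Gamma2_psi V E \<psi> f x0 \<ge> (lap_psi V E \<psi> f x0)\<^sup>2 / d"
        using cd fpos x0 unfolding CD_psi_def by blast
      have lp: "lap_psi V E \<psi> f w = \<phi> w t0" for w unfolding \<phi>_def f_def by simp
      have nb: "\<phi> w t0 \<ge> \<phi> x0 t0" if "w \<in> {w\<in>V. E x0 w}" for w
      proof -
        have "H w t0 \<le> H x0 t0" using glob that t0T by auto
        hence "- t0 * \<phi> w t0 \<le> - t0 * \<phi> x0 t0" unfolding H_def .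
        with t0pos show ?thesis by simp
      qed
      have S: "(\<Sum>w\<in>{w\<in>V. E x0 w}. f w * (lap_psi V E \<psi> f w - lap_psi V E \<psi> f x0)) \<ge> 0"
        unfolding lp using fpos nb by (intro sum_nonneg) auto
      have Omge: "Om \<ge> 2 * p\<^sup>2 / d"
      proof -
        have "Om = 2 * Gamma2_psi V E \<psi> f x0
           + (\<Sum>w\<in>{w\<in>V. E x0 w}. f w * (lap_psi V E \<psi> f w - lap_psi V E \<psi> f x0)) / f x0"
          unfolding Om_def by (rule gamma_ident) (use fpos x0 in auto)
        moreover have "(\<Sum>w\<in>{w\<in>V. E x0 w}. f w * (lap_psi V E \<psi> f w - lap_psi V E \<psi> f x0)) / f x0 \<ge> 0"
          using S fpos x0 by (intro divide_nonneg_pos) auto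
        ultimately have "Om \<ge> 2 * Gamma2_psi V E \<psi> f x0" by linarith
        moreover have "2 * Gamma2_psi V E \<psi> f x0 \<ge> 2 * p\<^sup>2 / d" using G lp p_def by simp
        ultimately show ?thesis by linarith
      qed
      have Dnn: "- p - t0 * Om \<ge> 0"
      proof (rule ccontr)
        assume "\<not> ?thesis"
        hence neg: "- p - t0 * Om < 0" by simp
        have hd: "(H x0 has_real_derivative (- p - t0 * Om)) (at t0 within {0..})"
          using Hder[OF x0(1), of t0] t0pos unfolding p_def Om_def f_def by simp
        from has_real_derivative_neg_dec_left[OF hd neg] obtain \<delta> where
          dl: "\<delta> > 0" "\<forall>h>0. t0 - h \<in> {0..} \<longrightarrow> h < \<delta> \<longrightarrow> H x0 t0 < H x0 (t0 - h)" by blast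
        define h where "h = min t0 (\<delta>/2)"
        have "H x0 t0 < H x0 (t0 - h)" using dl t0pos unfolding h_def by auto
        moreover have "H x0 (t0 - h) \<le> H x0 t0" using glob x0 t0T t0pos dl unfolding h_def by auto
        ultimately show False by simp
      qed
      have hdef: "H x0 t0 = - t0 * p" unfolding H_def p_def by simp
      define h0 where "h0 = H x0 t0"
      have "0 \<le> t0 * (- p - t0 * Om)" using Dnn t0pos by simp
      also have "\<dots> \<le> t0 * (- p - t0 * (2 * p\<^sup>2 / d))"
        using mult_left_mono[OF Omge, of t0] t0pos by (intro mult_left_mono) auto
      also have "\<dots> = h0 - 2 * h0\<^sup>2 / d" unfolding h0_def hdef
        by (simp add: power2_eq_square field_simps)
      also have "\<dots> = h0 * (d - 2 * h0) / d" using dpos by (simp add: field_simps power2_eq_square)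
      also have "\<dots> < 0"
      proof -
        have "h0 > 0" "d - 2 * h0 < 0" using hbig dpos h0_def by auto
        hence "h0 * (d - 2 * h0) < 0" by (simp add: mult_pos_neg)
        thus ?thesis using dpos by (simp add: divide_neg_pos)
      qed
      finally show False by simp
    qed
    have "H x T \<le> d / 2" using glob[OF xV, of T] T main by auto
    hence "- T * \<phi> x T \<le> d / 2" unfolding H_def .
    thus "- lap_psi V E \<psi> (\<lambda>y. u y T) x \<le> d / (2 * T)"
      using T unfolding \<phi>_def by (simp add: field_simps)
  qed
qed

end
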